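(* Let $H$ be a connected, locally finite graph. Then $\beta(P_{2\infty}\,\Box\, H)=2$ if and only if $H$ is the trivial graph $K_1$.
   Context: $P_{2\infty}$ is the two-way infinite path, with vertex set $\mathbb Z$ and $i,j$ adjacent iff $|i-j|=1$. The cartesian product $G\Box H$ has vertex set $V(G)\times V(H)$, where $(a,v)$ is adjacent to $(b,w)$ iff either $a=b$ and $vw\in E(H)$, or $v=w$ and $ab\in E(G)$. $d$ denotes shortest-path distance. A vertex $x$ resolves $u,v$ if $d(u,x)\ne d(v,x)$; a set of vertices is a resolving set if every pair of distinct vertices is resolved by some vertex of it. The metric dimension $\beta$ is the minimum cardinality of a resolving set if a finite one exists, and $\infty$ otherwise. *)

theory Defs
  imports Main "HOL-Library.Extended_Nat"
begin

definition graph :: "'a set \<Rightarrow> ('a \<Rightarrow> 'a \<Rightarrow> bool) \<Rightarrow> bool" where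
  "graph V E \<longleftrightarrow> (\<forall>x y. E x y \<longrightarrow> x \<in> V \<and> y \<in> V) \<and> (\<forall>x y. E x y \<longrightarrow> E y x) \<and> (\<forall>x. \<not> E x x)"

definition connected_graph :: "'a set \<Rightarrow> ('a \<Rightarrow> 'a \<Rightarrow> bool) \<Rightarrow> bool" where
  "connected_graph V E \<longleftrightarrow> V \<noteq> {} \<and> (\<forall>u\<in>V. \<forall>v\<in>V. \<exists>n. (E ^^ n) u v)"

definition locally_finite :: "'a set \<Rightarrow> ('a \<Rightarrow> 'a \<Rightarrow> bool) \<Rightarrow> bool" where
  "locally_finite V E \<longleftrightarrow> (\<forall>v\<in>V. finite {w. E v w})"

definition gdist :: "('a \<Rightarrow> 'a \<Rightarrow> bool) \<Rightarrow> 'a \<Rightarrow> 'a \<Rightarrow> enat" where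
  "gdist E u v = (if \<exists>n. (E ^^ n) u v then enat (LEAST n. (E ^^ n) u v) else \<infinity>)"

definition resolving_set :: "'a set \<Rightarrow> ('a \<Rightarrow> 'a \<Rightarrow> bool) \<Rightarrow> 'a set \<Rightarrow> bool" where
  "resolving_set V E W \<longleftrightarrow> W \<subseteq> V \<and>
     (\<forall>u\<in>V. \<forall>v\<in>V. u \<noteq> v \<longrightarrow> (\<exists>x\<in>W. gdist E u x \<noteq> gdist E v x))"

definition metric_dim :: "'a set \<Rightarrow> ('a \<Rightarrow> 'a \<Rightarrow> bool) \<Rightarrow> enat" where
  "metric_dim V E = (INF W \<in> {W. finite W \<and> resolving_set V E W}. enat (card W))"

definition path_Z_adj :: "int \<Rightarrow> int \<Rightarrow> bool" where
  "path_Z_adj i j \<longleftrightarrow> \<bar>i - j\<bar> = 1"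

definition cart_prod_adj :: "('a \<Rightarrow> 'a \<Rightarrow> bool) \<Rightarrow> ('b \<Rightarrow> 'b \<Rightarrow> bool) \<Rightarrow> ('a \<times> 'b) \<Rightarrow> ('a \<times> 'b) \<Rightarrow> bool" where
  "cart_prod_adj EG EH p q \<longleftrightarrow>
     (fst p = fst q \<and> EH (snd p) (snd q)) \<or> (snd p = snd q \<and> EG (fst p) (fst q))"

end

theory Submission
  imports Defs
begin

definition hd :: "('a \<Rightarrow> 'a \<Rightarrow> bool) \<Rightarrow> 'a \<Rightarrow> 'a \<Rightarrow> nat" where
  "hd E g h = (LEAST k. (E ^^ k) g h)"

lemma walk_Z: "(path_Z_adj ^^ n) i j" if "nat \<bar>i - j\<bar> = n" for i j :: int
  using that
proof (induction n arbitrary: j)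
  case 0
  then show ?case by simp
next
  case (Suc n)
  define j' where "j' = (if j > i then j - 1 else j + 1)"
  have "nat \<bar>i - j'\<bar> = n" using Suc.prems unfolding j'_def by auto
  then have "(path_Z_adj ^^ n) i j'" by (rule Suc.IH)
  moreover have "path_Z_adj j' j" unfolding j'_def path_Z_adj_def by auto
  ultimately show ?case by (rule relpowp_Suc_I)
qed

lemma lift_Z: "(path_Z_adj ^^ n) i j \<Longrightarrow> (cart_prod_adj path_Z_adj E ^^ n) (i,g) (j,g)"
proof (induction n arbitrary: j)
  case 0
  then show ?case by simp
next
  case (Suc n)
  from Suc.prems obtain y where "(path_Z_adj ^^ n) i y" "path_Z_adj y j" by (rule relpowp_Suc_E)
  then show ?case using Suc.IH
    by (metis cart_prod_adj_def fst_conv relpowp_Suc_I snd_conv)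
qed

lemma lift_H: "(E ^^ n) g h \<Longrightarrow> (cart_prod_adj path_Z_adj E ^^ n) (i,g) (i,h)"
proof (induction n arbitrary: h)
  case 0
  then show ?case by simp
next
  case (Suc n)
  from Suc.prems obtain y where "(E ^^ n) g y" "E y h" by (rule relpowp_Suc_E)
  then show ?case using Suc.IH
    by (metis cart_prod_adj_def fst_conv relpowp_Suc_I snd_conv)
qed

lemma lower: "(cart_prod_adj path_Z_adj E ^^ n) (i,g) (j,h) \<Longrightarrow>
   \<exists>k. (E ^^ k) g h \<and> nat \<bar>i - j\<bar> + k \<le> n"
proof (induction n arbitrary: j h)
  case 0
  then show ?case by (intro exI[of _ 0]) auto
next
  case (Suc n)
  from Suc.prems obtain y where y: "(cart_prod_adj path_Z_adj E ^^ n) (i,g) y"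
    "cart_prod_adj path_Z_adj E y (j,h)" by (rule relpowp_Suc_E)
  obtain j' h' where yy: "y = (j',h')" by (cases y)
  from Suc.IH[of j' h'] y yy obtain k where k: "(E ^^ k) g h'" "nat \<bar>i - j'\<bar> + k \<le> n" by auto
  from y(2) yy have "(j' = j \<and> E h' h) \<or> (h' = h \<and> \<bar>j' - j\<bar> = 1)"
    unfolding cart_prod_adj_def path_Z_adj_def by auto
  then show ?case
  proof
    assume a: "j' = j \<and> E h' h"
    then have "(E ^^ Suc k) g h" using k by (metis relpowp_Suc_I)
    then show ?thesis using k a by (intro exI[of _ "Suc k"]) auto
  next
    assume a: "h' = h \<and> \<bar>j' - j\<bar> = 1"
    then show ?thesis using k by (intro exI[of _ k]) auto
  qed
qed

lemma pdist:
  assumes "(E ^^ k0) g h"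
  shows "gdist (cart_prod_adj path_Z_adj E) (i,g) (j,h) = enat (nat \<bar>i - j\<bar> + hd E g h)"
proof -
  let ?P = "cart_prod_adj path_Z_adj E"
  have d: "(E ^^ hd E g h) g h" unfolding hd_def using assms by (rule LeastI)
  have w: "(?P ^^ (nat \<bar>i - j\<bar> + hd E g h)) (i,g) (j,h)"
    unfolding relpowp_add using lift_Z[OF walk_Z[OF refl], of i j E g] lift_H[OF d, of j] by blast
  have "(LEAST n. (?P ^^ n) (i,g) (j,h)) = nat \<bar>i - j\<bar> + hd E g h"
  proof (rule Least_equality)
    show "(?P ^^ (nat \<bar>i - j\<bar> + hd E g h)) (i,g) (j,h)" by (rule w)
  next
    fix n assume nn: "(?P ^^ n) (i,g) (j,h)"
    obtain k where "(E ^^ k) g h" "nat \<bar>i - j\<bar> + k \<le> n" using lower[OF nn] by blast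
    moreover have "hd E g h \<le> k" unfolding hd_def using \<open>(E ^^ k) g h\<close> by (rule Least_le)
    ultimately show "nat \<bar>i - j\<bar> + hd E g h \<le> n" by simp
  qed
  then show ?thesis using w unfolding gdist_def by auto
qed


lemma hd_refl: "hd E h h = 0"
  unfolding hd_def by (rule Least_equality) auto

lemma hd_one: assumes "E u h" "u \<noteq> h" shows "hd E u h = 1"
  unfolding hd_def
proof (rule Least_equality)
  show "(E ^^ 1) u h" using assms by (simp only: relpowp_1)
next
  fix n assume "(E ^^ n) u h"
  then show "1 \<le> n" using assms(2) by (cases n) auto
qed

lemma hd_step:
  assumes "(E ^^ n) h1 h2" "h1 \<noteq> h2"
  shows "\<exists>u. E h1 u \<and> hd E u h2 + 1 = hd E h1 h2"
proof -
  define d where "d = hd E h1 h2"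
  have dd: "(E ^^ d) h1 h2" unfolding d_def hd_def using assms(1) by (rule LeastI)
  then have "d \<noteq> 0" using assms(2) by (cases d) auto
  then obtain d' where d': "d = Suc d'" by (cases d) auto
  from dd d' obtain u where u: "E h1 u" "(E ^^ d') u h2" by (metis relpowp_Suc_D2)
  have "hd E u h2 \<le> d'" unfolding hd_def using u(2) by (rule Least_le)
  moreover
  have uu: "(E ^^ hd E u h2) u h2" unfolding hd_def using u(2) by (rule LeastI)
  have "(E ^^ Suc (hd E u h2)) h1 h2" using u(1) uu by (rule relpowp_Suc_I2)
  then have "d \<le> Suc (hd E u h2)" unfolding d_def hd_def by (rule Least_le)
  ultimately show ?thesis using u d' d_def by (intro exI[of _ u]) auto
qed

abbreviation "PP E \<equiv> cart_prod_adj path_Z_adj E"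

lemma pd:
  assumes "connected_graph V E" "g \<in> V" "h \<in> V"
  shows "gdist (PP E) (i,g) (j,h) = enat (nat \<bar>i - j\<bar> + hd E g h)"
proof -
  from assms obtain n where "(E ^^ n) g h" unfolding connected_graph_def by blast
  then show ?thesis by (rule pdist)
qed

lemma coll_same:
  assumes "connected_graph V E" "h1 \<in> V" "h2 \<in> V"
  shows "\<exists>u\<in>UNIV \<times> V. \<exists>v\<in>UNIV \<times> V. u \<noteq> v \<and>
     gdist (PP E) u (a,h1) = gdist (PP E) v (a,h1) \<and> gdist (PP E) u (a,h2) = gdist (PP E) v (a,h2)"
proof (intro bexI conjI)
  show "(a+1,h1) \<noteq> (a-1,h1)" by simp
  show "gdist (PP E) (a+1,h1) (a,h1) = gdist (PP E) (a-1,h1) (a,h1)"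
    using pd[OF assms(1,2,2)] by simp
  show "gdist (PP E) (a+1,h1) (a,h2) = gdist (PP E) (a-1,h1) (a,h2)"
    using pd[OF assms(1,2,3)] by simp
qed (use assms in auto)

lemma coll_lt:
  assumes g: "graph V E" and c: "connected_graph V E" and h: "h1 \<in> V" "h2 \<in> V" "h1 \<noteq> h2"
    and a: "a1 < a2"
  shows "\<exists>u\<in>UNIV \<times> V. \<exists>v\<in>UNIV \<times> V. u \<noteq> v \<and>
     gdist (PP E) u (a1,h1) = gdist (PP E) v (a1,h1) \<and> gdist (PP E) u (a2,h2) = gdist (PP E) v (a2,h2)"
proof -
  from c h obtain n where "(E ^^ n) h1 h2" unfolding connected_graph_def by blast
  from hd_step[OF this h(3)] obtain u where u: "E h1 u" "hd E u h2 + 1 = hd E h1 h2" by blast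
  have uV: "u \<in> V" and sym: "E u h1" and nu: "u \<noteq> h1" using g u(1) unfolding graph_def by metis+
  have h1u: "hd E u h1 = 1" using hd_one[of E u h1] sym nu by blast
  show ?thesis
  proof (intro bexI conjI)
    show "(a1+1,h1) \<noteq> (a1,u)" by simp
    show "gdist (PP E) (a1+1,h1) (a1,h1) = gdist (PP E) (a1,u) (a1,h1)"
      using pd[OF c h(1) h(1)] pd[OF c uV h(1)] h1u hd_refl[of E h1] by simp
    show "gdist (PP E) (a1+1,h1) (a2,h2) = gdist (PP E) (a1,u) (a2,h2)"
      using pd[OF c h(1) h(2)] pd[OF c uV h(2)] u(2) a by simp
  qed (use uV h in auto)
qed

lemma coll_eqh:
  assumes g: "graph V E" and c: "connected_graph V E" and h: "h1 \<in> V" "v \<in> V" "v \<noteq> h1"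
  shows "\<exists>u\<in>UNIV \<times> V. \<exists>v\<in>UNIV \<times> V. u \<noteq> v \<and>
     gdist (PP E) u (a1,h1) = gdist (PP E) v (a1,h1) \<and> gdist (PP E) u (a2,h1) = gdist (PP E) v (a2,h1)"
proof -
  from c h obtain n where "(E ^^ n) h1 v" unfolding connected_graph_def by blast
  from hd_step[OF this h(3)[symmetric]] obtain u where u: "E h1 u" by blast
  have uV: "u \<in> V" and sym: "E u h1" and nu: "u \<noteq> h1" using g u(1) unfolding graph_def by metis+
  have h1u: "hd E u h1 = 1" using hd_one[of E u h1] sym nu by blast
  define i where "i = max a1 a2 + 1"
  show ?thesis
  proof (intro bexI conjI)
    show "(i,h1) \<noteq> (i - 1,u)" using nu by simp
    show "gdist (PP E) (i,h1) (a1,h1) = gdist (PP E) (i - 1,u) (a1,h1)"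
      using pd[OF c h(1) h(1)] pd[OF c uV h(1)] h1u hd_refl[of E h1] i_def by simp
    show "gdist (PP E) (i,h1) (a2,h1) = gdist (PP E) (i - 1,u) (a2,h1)"
      using pd[OF c h(1) h(1)] pd[OF c uV h(1)] h1u hd_refl[of E h1] i_def by simp
  qed (use uV h in auto)
qed

lemma coll:
  assumes g: "graph V E" and c: "connected_graph V E" and nt: "\<not> (\<exists>x. V = {x})"
    and w: "w1 \<in> UNIV \<times> V" "w2 \<in> UNIV \<times> V"
  shows "\<exists>u\<in>UNIV \<times> V. \<exists>v\<in>UNIV \<times> V. u \<noteq> v \<and>
     gdist (PP E) u w1 = gdist (PP E) v w1 \<and> gdist (PP E) u w2 = gdist (PP E) v w2"
proof -
  obtain a1 h1 where w1: "w1 = (a1,h1)" by (cases w1)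
  obtain a2 h2 where w2: "w2 = (a2,h2)" by (cases w2)
  have h: "h1 \<in> V" "h2 \<in> V" using w w1 w2 by auto
  obtain v where v: "v \<in> V" "v \<noteq> h1" using nt h(1) by blast
  consider "a1 = a2" | "h1 = h2" | "h1 \<noteq> h2" "a1 < a2" | "h1 \<noteq> h2" "a2 < a1" by linarith
  then show ?thesis
  proof cases
    case 1 then show ?thesis using coll_same[OF c h] w1 w2 by simp
  next
    case 2 then show ?thesis using coll_eqh[OF g c h(1) v] w1 w2 by simp
  next
    case 3 then show ?thesis using coll_lt[OF g c h] w1 w2 by simp
  next
    case 4 then show ?thesis using coll_lt[OF g c h(2,1) _ 4(2)] w1 w2 by blast
  qed
qed

lemma card_ge3:
  assumes ne: "VV \<noteq> {}"
    and col: "\<forall>w1\<in>VV. \<forall>w2\<in>VV. \<exists>u\<in>VV. \<exists>v\<in>VV. u \<noteq> v \<and>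
       gdist EE u w1 = gdist EE v w1 \<and> gdist EE u w2 = gdist EE v w2"
    and f: "finite W" and r: "resolving_set VV EE W"
  shows "3 \<le> card W"
proof (rule ccontr)
  assume "\<not> 3 \<le> card W"
  then have cw: "card W \<le> 2" by simp
  have WV: "W \<subseteq> VV" using r unfolding resolving_set_def by blast
  obtain w1 w2 where ww: "w1 \<in> VV" "w2 \<in> VV" "W \<subseteq> {w1,w2}"
  proof -
    consider "card W = 0" | "card W = 1" | "card W = 2" using cw by linarith
    then show ?thesis
    proof cases
      case 1 then have "W = {}" using f by simp
      then show ?thesis using ne that by blast
    next
      case 2 then obtain w where "W = {w}" by (metis card_1_singletonE)
      then show ?thesis using WV that by blast
    next
      case 3 then obtain x y where "W = {x,y}" by (metis card_2_iff)
      then show ?thesis using WV that by blast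
    qed
  qed
  from col ww obtain u v where uv: "u \<in> VV" "v \<in> VV" "u \<noteq> v"
    "gdist EE u w1 = gdist EE v w1" "gdist EE u w2 = gdist EE v w2" by blast
  from r uv obtain x where "x \<in> W" "gdist EE u x \<noteq> gdist EE v x"
    unfolding resolving_set_def by blast
  then show False using ww uv by blast
qed

lemma md_ge3:
  assumes ne: "VV \<noteq> {}"
    and col: "\<forall>w1\<in>VV. \<forall>w2\<in>VV. \<exists>u\<in>VV. \<exists>v\<in>VV. u \<noteq> v \<and>
       gdist EE u w1 = gdist EE v w1 \<and> gdist EE u w2 = gdist EE v w2"
  shows "3 \<le> metric_dim VV EE"
  unfolding metric_dim_def
proof (rule INF_greatest)
  fix W assume "W \<in> {W. finite W \<and> resolving_set VV EE W}"
  then have "3 \<le> card W" using card_ge3[OF ne col] by blast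
  then show "3 \<le> enat (card W)" by (simp add: numeral_eq_enat)
qed


lemma card_ge2:
  assumes ne: "VV \<noteq> {}"
    and col: "\<forall>w\<in>VV. \<exists>u\<in>VV. \<exists>v\<in>VV. u \<noteq> v \<and> gdist EE u w = gdist EE v w"
    and f: "finite W" and r: "resolving_set VV EE W"
  shows "2 \<le> card W"
proof (rule ccontr)
  assume "\<not> 2 \<le> card W"
  then have cw: "card W \<le> 1" by simp
  have WV: "W \<subseteq> VV" using r unfolding resolving_set_def by blast
  obtain w where ww: "w \<in> VV" "W \<subseteq> {w}"
  proof -
    consider "card W = 0" | "card W = 1" using cw by linarith
    then show ?thesis
    proof cases
      case 1 then have "W = {}" using f by simp
      then show ?thesis using ne that by blast
    next
      case 2 then obtain w where "W = {w}" by (metis card_1_singletonE)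
      then show ?thesis using WV that by blast
    qed
  qed
  from col ww obtain u v where uv: "u \<in> VV" "v \<in> VV" "u \<noteq> v"
    "gdist EE u w = gdist EE v w" by blast
  from r uv obtain x where "x \<in> W" "gdist EE u x \<noteq> gdist EE v x"
    unfolding resolving_set_def by blast
  then show False using ww uv by blast
qed

lemma md_single:
  assumes c: "connected_graph V E" and V: "V = {x}"
  shows "metric_dim ((UNIV :: int set) \<times> V) (PP E) = 2"
proof -
  have xV: "x \<in> V" using V by simp
  let ?VV = "(UNIV :: int set) \<times> V"
  have col: "\<forall>w\<in>?VV. \<exists>u\<in>?VV. \<exists>v\<in>?VV. u \<noteq> v \<and> gdist (PP E) u w = gdist (PP E) v w"
  proof
    fix w assume "w \<in> ?VV"
    then obtain a where w: "w = (a,x)" using V by auto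
    show "\<exists>u\<in>?VV. \<exists>v\<in>?VV. u \<noteq> v \<and> gdist (PP E) u w = gdist (PP E) v w"
      using coll_same[OF c xV xV, of a] w by blast
  qed
  have ge: "2 \<le> metric_dim ?VV (PP E)"
    unfolding metric_dim_def
  proof (rule INF_greatest)
    fix W assume "W \<in> {W. finite W \<and> resolving_set ?VV (PP E) W}"
    then have "2 \<le> card W" using card_ge2[OF _ col] V by blast
    then show "2 \<le> enat (card W)" by (simp add: numeral_eq_enat)
  qed
  let ?W = "{(0::int,x),(1,x)}"
  have r: "resolving_set ?VV (PP E) ?W"
    unfolding resolving_set_def
  proof (intro conjI ballI impI)
    show "?W \<subseteq> ?VV" using V by auto
  next
    fix u v assume uv: "u \<in> ?VV" "v \<in> ?VV" "u \<noteq> v"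
    then obtain i j where ij: "u = (i,x)" "v = (j,x)" "i \<noteq> j" using V by auto
    have d: "\<And>k l. gdist (PP E) (k,x) (l,x) = enat (nat \<bar>k - l\<bar>)"
      using pd[OF c xV xV] hd_refl[of E x] by simp
    show "\<exists>y\<in>?W. gdist (PP E) u y \<noteq> gdist (PP E) v y"
    proof (rule ccontr)
      assume "\<not> ?thesis"
      then have "nat \<bar>i\<bar> = nat \<bar>j\<bar>" "nat \<bar>i - 1\<bar> = nat \<bar>j - 1\<bar>" using ij d by auto
      then show False using ij(3) by arith
    qed
  qed
  have "metric_dim ?VV (PP E) \<le> enat (card ?W)"
    unfolding metric_dim_def by (rule INF_lower) (use r in simp)
  then have "metric_dim ?VV (PP E) \<le> 2" by (simp add: eval_nat_numeral numeral_eq_enat)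
  then show ?thesis using ge by simp
qed

theorem lemma7:
  fixes V :: "'a set" and E :: "'a \<Rightarrow> 'a \<Rightarrow> bool"
  assumes "graph V E" and "connected_graph V E" and "locally_finite V E"
  shows "metric_dim ((UNIV :: int set) \<times> V) (cart_prod_adj path_Z_adj E) = 2
         \<longleftrightarrow> (\<exists>x. V = {x})"
proof
  assume "\<exists>x. V = {x}"
  then show "metric_dim ((UNIV :: int set) \<times> V) (cart_prod_adj path_Z_adj E) = 2"
    using md_single[OF assms(2)] by blast
next
  assume m: "metric_dim ((UNIV :: int set) \<times> V) (cart_prod_adj path_Z_adj E) = 2"
  show "\<exists>x. V = {x}"
  proof (rule ccontr)
    assume nt: "\<not> (\<exists>x. V = {x})"
    have ne: "(UNIV :: int set) \<times> V \<noteq> {}" using assms(2) unfolding connected_graph_def by auto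
    have "3 \<le> metric_dim ((UNIV :: int set) \<times> V) (cart_prod_adj path_Z_adj E)"
      by (rule md_ge3[OF ne]) (use coll[OF assms(1,2) nt] in blast)
    then show False using m by (simp add: numeral_eq_enat)
  qed
qed

end
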